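(* Fix $\alpha,\lambda>0$. Let $V_t$ be the expected number of individuals alive at time $t$ in the single-site ageing branching process where each individual has an Exp(1) lifetime and an individual born at time $\bar t$ produces children at the arrival times, during its life, of an inhomogeneous Poisson process of intensity $\lambda e^{-\alpha(t-\bar t)}$ (started from $V_0>0$ individuals of age $0$). Let $S_t$ be the expected number of individuals alive at time $t$ in the classical continuous-time branching process in which each individual dies at rate $1$ and reproduces at rate $\lambda/(1+\alpha)$, started with $S_0=V_0$ individuals (so $S_t=V_0e^{(\lambda/(\alpha+1)-1)t}$). As $t\to\infty$: (1) if $\lambda>\alpha+1$, both $V_t,S_t\to\infty$, $V_t\sim\frac{\lambda}{\lambda-\alpha}V_0e^{(\lambda-\alpha-1)t}$, and $V_t>S_t$ for all sufficiently large $t$; (2) if $\lambda=\alpha+1$, $S_t=V_0$ for all $t\ge0$ and $V_t\to\lambda V_0$; (3) if $\alpha<\lambda<\alpha+1$, both $V_t,S_t\to0$, $V_t\sim\frac{\lambda}{\lambda-\alpha}V_0e^{(\lambda-\alpha-1)t}$, and $S_t>V_t$ for all sufficiently large $t$; (4) if $\lambda=\alpha$, both $V_t,S_t\to0$, $V_t\sim\alpha tV_0e^{-t}$, and $S_t>V_t$ for all sufficiently large $t$; (5) if $\lambda<\alpha$, both $V_t,S_t\to0$, $V_t\sim\frac{\alpha}{\alpha-\lambda}V_0e^{-t}$, and $S_t>V_t$ for all sufficiently large $t$. *)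

theory Defs
  imports "HOL-Analysis.Analysis" "HOL-Library.Landau_Symbols"
begin

text \<open>First-moment (mean) equations of the single-site ageing branching process.
  b t is the expected birth-rate density at time t; an individual born at time s is alive
  at time t \<ge> s with probability exp(-(t-s)) and, while alive, gives birth at rate
  lam * exp(-alpha*(t-s)). The initial V0 individuals have age 0 at time 0.\<close>

definition ageing_birth_eq :: "real \<Rightarrow> real \<Rightarrow> real \<Rightarrow> (real \<Rightarrow> real) \<Rightarrow> bool" where
  "ageing_birth_eq alpha lam V0 b \<longleftrightarrow>
     continuous_on {0..} b \<and>
     (\<forall>t\<ge>0. b t = V0 * lam * exp (-(1 + alpha) * t)
                 + integral {0..t} (\<lambda>s. b s * lam * exp (-(1 + alpha) * (t - s))))"

definition ageing_mean :: "real \<Rightarrow> (real \<Rightarrow> real) \<Rightarrow> real \<Rightarrow> real" where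
  "ageing_mean V0 b t = V0 * exp (- t) + integral {0..t} (\<lambda>s. b s * exp (-(t - s)))"

definition classical_mean :: "real \<Rightarrow> real \<Rightarrow> real \<Rightarrow> real \<Rightarrow> real" where
  "classical_mean alpha lam V0 t = V0 * exp ((lam / (alpha + 1) - 1) * t)"

end

theory Submission
  imports Defs "HOL-Real_Asymp.Real_Asymp"
begin

lemma b_closed:
  fixes alpha lam V0 t :: real and b :: "real \<Rightarrow> real"
  assumes "ageing_birth_eq alpha lam V0 b" "t \<ge> 0"
  shows "b t = V0 * lam * exp ((lam - (1 + alpha)) * t)"
proof -
  define c where "c = 1 + alpha"
  define u where "u s = b s * exp (c * s)" for s
  from assms(1) have cb: "continuous_on {0..} b"
    and eq: "\<And>t. t \<ge> 0 \<Longrightarrow> b t = V0 * lam * exp (-(1 + alpha) * t)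
                 + integral {0..t} (\<lambda>s. b s * lam * exp (-(1 + alpha) * (t - s)))"
    by (auto simp: ageing_birth_eq_def)
  have cu: "continuous_on {0..t} u" unfolding u_def
    by (intro continuous_intros continuous_on_subset[OF cb]) auto
  have ueq: "u x = V0 * lam + lam * integral {0..x} u" if "0 \<le> x" for x
  proof -
    have e: "exp (-(1 + alpha) * (x - s)) = exp (- c * x) * exp (c * s)" for s
      by (simp add: c_def flip: exp_add) (simp add: algebra_simps)
    have "integral {0..x} (\<lambda>s. b s * lam * exp (-(1 + alpha) * (x - s)))
          = integral {0..x} (\<lambda>s. (lam * exp (- c * x)) * u s)"
      by (rule integral_cong) (subst e, simp add: u_def)
    also have "\<dots> = lam * exp (- c * x) * integral {0..x} u" by simp
    finally have "b x = V0 * lam * exp (- c * x) + lam * exp (- c * x) * integral {0..x} u"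
      using eq[OF that] by (simp add: c_def)
    then have "u x = (V0 * lam * exp (- c * x) + lam * exp (- c * x) * integral {0..x} u) * exp (c * x)"
      by (simp add: u_def)
    also have "\<dots> = (V0 * lam + lam * integral {0..x} u) * (exp (- c * x) * exp (c * x))"
      by (simp add: algebra_simps)
    also have "exp (- c * x) * exp (c * x) = 1" by (simp flip: exp_add)
    finally show ?thesis by simp
  qed
  define G where "G x = (integral {0..x} u + V0) * exp (- lam * x)" for x
  have "\<exists>k. \<forall>x\<in>{0..t}. G x = k"
  proof (rule has_field_derivative_zero_constant)
    fix x assume x: "x \<in> {0..t}"
    have d: "((\<lambda>x. integral {0..x} u) has_real_derivative u x) (at x within {0..t})"
      by (rule integral_has_real_derivative[OF cu x])
    have "(G has_real_derivative (u x * exp (- lam * x) + (integral {0..x} u + V0) * (exp (- lam * x) * (- lam)))) (at x within {0..t})"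
      unfolding G_def by (auto intro!: derivative_eq_intros d)
    moreover have "u x * exp (- lam * x) + (integral {0..x} u + V0) * (exp (- lam * x) * (- lam)) = 0"
      using ueq[of x] x by (simp add: algebra_simps)
    ultimately show "(G has_real_derivative 0) (at x within {0..t})" by simp
  qed simp
  then obtain k where k: "\<And>x. x \<in> {0..t} \<Longrightarrow> G x = k" by blast
  have "G t = G 0" using k[of t] k[of 0] assms(2) by simp
  then have "(integral {0..t} u + V0) * exp (- lam * t) = V0" by (simp add: G_def)
  then have I: "integral {0..t} u + V0 = V0 * exp (lam * t)"
    by (simp add: exp_minus field_simps)
  have "u t = lam * (integral {0..t} u + V0)"
    using ueq[OF assms(2)] by (simp add: algebra_simps)
  then have "u t = V0 * lam * exp (lam * t)" unfolding I by simp
  then have "b t * exp (c * t) = V0 * lam * exp (lam * t)" by (simp add: u_def)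
  then have "b t = V0 * lam * exp (lam * t) * exp (- c * t)"
    by (simp add: exp_minus field_simps)
  also have "\<dots> = V0 * lam * exp ((lam - (1 + alpha)) * t)"
    by (simp add: c_def mult.assoc flip: exp_add) (simp add: algebra_simps)
  finally show ?thesis .
qed

lemma V_closed:
  fixes alpha lam V0 t :: real and b :: "real \<Rightarrow> real"
  assumes "ageing_birth_eq alpha lam V0 b" "t \<ge> 0"
  shows "ageing_mean V0 b t = (if lam = alpha then V0 * exp (- t) * (1 + alpha * t)
     else - alpha / (lam - alpha) * V0 * exp (- t) + lam / (lam - alpha) * V0 * exp ((lam - alpha - 1) * t))"
proof -
  have "integral {0..t} (\<lambda>s. b s * exp (-(t - s))) = integral {0..t} (\<lambda>s. V0 * lam * exp ((lam - alpha) * s - t))"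
  proof (rule integral_cong)
    fix s assume "s \<in> {0..t}"
    then have "b s = V0 * lam * exp ((lam - (1 + alpha)) * s)" using b_closed[OF assms(1)] by auto
    then show "b s * exp (-(t - s)) = V0 * lam * exp ((lam - alpha) * s - t)"
      by (simp add: mult.assoc flip: exp_add) (simp add: algebra_simps)
  qed
  also have "\<dots> = (if lam = alpha then V0 * lam * t * exp (- t)
     else V0 * lam * exp ((lam - alpha - 1) * t) / (lam - alpha) - V0 * lam * exp (- t) / (lam - alpha))"
  proof (cases "lam = alpha")
    case True
    have "((\<lambda>s. V0 * lam * exp ((lam - alpha) * s - t)) has_integral (V0 * lam * t * exp (- t) - V0 * lam * 0 * exp (- t))) {0..t}"
    proof (rule fundamental_theorem_of_calculus[OF assms(2)])
      fix x assume "x \<in> {0..t}"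
      show "((\<lambda>s. V0 * lam * s * exp (- t)) has_vector_derivative V0 * lam * exp ((lam - alpha) * x - t)) (at x within {0..t})"
        unfolding has_real_derivative_iff_has_vector_derivative[symmetric] using True
        by (auto intro!: derivative_eq_intros)
    qed
    then show ?thesis using True assms(2) by (simp add: integral_unique)
  next
    case False
    have "((\<lambda>s. V0 * lam * exp ((lam - alpha) * s - t)) has_integral
       (V0 * lam * exp ((lam - alpha) * t - t) / (lam - alpha) - V0 * lam * exp ((lam - alpha) * 0 - t) / (lam - alpha))) {0..t}"
    proof (rule fundamental_theorem_of_calculus[OF assms(2)])
      fix x assume "x \<in> {0..t}"
      show "((\<lambda>s. V0 * lam * exp ((lam - alpha) * s - t) / (lam - alpha)) has_vector_derivative V0 * lam * exp ((lam - alpha) * x - t)) (at x within {0..t})"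
        unfolding has_real_derivative_iff_has_vector_derivative[symmetric] using False
        by (auto intro!: derivative_eq_intros)
    qed
    moreover have "(lam - alpha) * t - t = (lam - alpha - 1) * t" by (simp add: algebra_simps)
    ultimately have "((\<lambda>s. V0 * lam * exp ((lam - alpha) * s - t)) has_integral
       (V0 * lam * exp ((lam - alpha - 1) * t) / (lam - alpha) - V0 * lam * exp (- t) / (lam - alpha))) {0..t}"
      by (simp only: mult_zero_right diff_0)
    then have "integral {0..t} (\<lambda>s. V0 * lam * exp ((lam - alpha) * s - t)) =
       V0 * lam * exp ((lam - alpha - 1) * t) / (lam - alpha) - V0 * lam * exp (- t) / (lam - alpha)"
      by (rule integral_unique)
    then show ?thesis by (subst if_not_P[OF False])
  qed
  finally have X: "integral {0..t} (\<lambda>s. b s * exp (-(t - s))) = (if lam = alpha then V0 * lam * t * exp (- t)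
     else V0 * lam * exp ((lam - alpha - 1) * t) / (lam - alpha) - V0 * lam * exp (- t) / (lam - alpha))" .
  show ?thesis
  proof (cases "lam = alpha")
    case True with X show ?thesis by (simp add: ageing_mean_def algebra_simps)
  next
    case False
    then have d: "lam - alpha \<noteq> 0" by simp
    have aux: "d \<noteq> 0 \<Longrightarrow> V0*F + (V0*lam*E/d - V0*lam*F/d) = -(lam - d)/d*V0*F + lam/d*V0*E" for d E F :: real
      by (simp add: field_simps)
    have "ageing_mean V0 b t = V0 * exp (- t) + (V0 * lam * exp ((lam - alpha - 1) * t) / (lam - alpha) - V0 * lam * exp (- t) / (lam - alpha))"
      using X False by (simp add: ageing_mean_def)
    also have "\<dots> = - alpha / (lam - alpha) * V0 * exp (- t) + lam / (lam - alpha) * V0 * exp ((lam - alpha - 1) * t)"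
      using aux[OF d] by simp
    finally show ?thesis using False by simp
  qed
qed

lemma exp_neg_lim:
  fixes k :: real assumes "k < 0" shows "((\<lambda>t. exp (k * t)) \<longlongrightarrow> 0) at_top"
  using assms by real_asymp

lemma dom_ev:
  fixes A B C p q r :: real
  assumes "A > 0" "r < p" "q < p"
  shows "\<forall>\<^sub>F t in at_top. B * exp (r * t) + C * exp (q * t) < A * exp (p * t)"
proof -
  have "((\<lambda>t. B * exp ((r - p) * t) + C * exp ((q - p) * t)) \<longlongrightarrow> B * 0 + C * 0) at_top"
    by (intro tendsto_intros exp_neg_lim) (use assms in auto)
  then have "\<forall>\<^sub>F t in at_top. B * exp ((r - p) * t) + C * exp ((q - p) * t) < A"
    using assms(1) by (auto dest: order_tendstoD(2))
  then show ?thesis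
  proof eventually_elim
    case (elim t)
    then have "(B * exp ((r - p) * t) + C * exp ((q - p) * t)) * exp (p * t) < A * exp (p * t)"
      by simp
    moreover have "(B * exp ((r - p) * t) + C * exp ((q - p) * t)) * exp (p * t) = B * exp (r * t) + C * exp (q * t)"
      by (simp add: algebra_simps flip: exp_add)
    ultimately show ?case by simp
  qed
qed

lemma dom_equiv:
  fixes A B p r :: real
  assumes "A \<noteq> 0" "r < p"
  shows "(\<lambda>t. A * exp (p * t) + B * exp (r * t)) \<sim>[at_top] (\<lambda>t. A * exp (p * t))"
proof (rule asymp_equivI')
  have "((\<lambda>t. 1 + B / A * exp ((r - p) * t)) \<longlongrightarrow> 1 + B / A * 0) at_top"
    by (intro tendsto_intros exp_neg_lim) (use assms in auto)
  moreover have "1 + B / A * exp ((r - p) * t) = (A * exp (p * t) + B * exp (r * t)) / (A * exp (p * t))" for t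
    using assms(1) by (simp add: field_simps flip: exp_add)
  ultimately show "((\<lambda>t. (A * exp (p * t) + B * exp (r * t)) / (A * exp (p * t))) \<longlongrightarrow> 1) at_top"
    by simp
qed

lemma exp_pos_lim:
  fixes k A :: real assumes "k > 0" "A > 0" shows "filterlim (\<lambda>t. A * exp (k * t)) at_top at_top"
  using assms by real_asymp

lemma case1:
  fixes alpha lam V0 :: real and V :: "real \<Rightarrow> real"
  assumes "alpha > 0" "lam > 0" "V0 > 0" "lam > alpha + 1"
    and Vc: "\<forall>\<^sub>F t in at_top. V t = - alpha / (lam - alpha) * V0 * exp (- t) + lam / (lam - alpha) * V0 * exp ((lam - alpha - 1) * t)"
  shows "filterlim V at_top at_top \<and> filterlim (classical_mean alpha lam V0) at_top at_top \<and>
       V \<sim>[at_top] (\<lambda>t. lam / (lam - alpha) * V0 * exp ((lam - alpha - 1) * t)) \<and>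
       (\<forall>\<^sub>F t in at_top. V t > classical_mean alpha lam V0 t)"
proof -
  define A where "A = lam / (lam - alpha) * V0"
  define B where "B = - alpha / (lam - alpha) * V0"
  define p where "p = lam - alpha - 1"
  define q where "q = lam / (alpha + 1) - 1"
  have A: "A > 0" unfolding A_def using assms by simp
  have Bn: "- B > 0" unfolding B_def using assms by (simp add: field_simps)
  have p: "p > 0" unfolding p_def using assms by simp
  have idq: "p - q = p * alpha / (alpha + 1)" unfolding p_def q_def using assms(1) by (simp add: field_simps)
  have "p * alpha / (alpha + 1) > 0" using p assms(1) by simp
  then have qp: "q < p" using idq by linarith
  have q: "q > 0" unfolding q_def using assms by (simp add: field_simps)
  have Sd: "classical_mean alpha lam V0 = (\<lambda>t. V0 * exp (q * t))" by (auto simp: classical_mean_def q_def)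
  have Vc': "\<forall>\<^sub>F t in at_top. V t = A * exp (p * t) + B * exp ((-1) * t)"
    using Vc by eventually_elim (simp add: A_def B_def p_def)
  have eq: "V \<sim>[at_top] (\<lambda>t. A * exp (p * t))"
  proof -
    have "(\<lambda>t. A * exp (p * t) + B * exp ((-1) * t)) \<sim>[at_top] (\<lambda>t. A * exp (p * t))"
      by (rule dom_equiv) (use A p in auto)
    then show ?thesis using asymp_equiv_cong[OF Vc', of "\<lambda>t. A * exp (p * t)" "\<lambda>t. A * exp (p * t)"] by simp
  qed
  have 1: "filterlim V at_top at_top"
    using asymp_equiv_at_top_transfer[OF asymp_equiv_symI[OF eq] exp_pos_lim[OF p A]] .
  have 2: "filterlim (classical_mean alpha lam V0) at_top at_top"
    unfolding Sd using exp_pos_lim[OF q assms(3)] .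
  have 4: "\<forall>\<^sub>F t in at_top. V t > classical_mean alpha lam V0 t"
    using dom_ev[where A=A and B="-B" and r="-1" and C=V0 and q=q and p=p] A p qp Vc' unfolding Sd
    by (auto elim: eventually_elim2)
  show ?thesis using 1 2 4 eq by (simp add: A_def p_def)
qed

lemma case2:
  fixes alpha lam V0 :: real and V :: "real \<Rightarrow> real"
  assumes "alpha > 0" "lam > 0" "V0 > 0" "lam = alpha + 1"
    and Vc: "\<forall>\<^sub>F t in at_top. V t = - alpha / (lam - alpha) * V0 * exp (- t) + lam / (lam - alpha) * V0 * exp ((lam - alpha - 1) * t)"
  shows "(\<forall>t\<ge>0. classical_mean alpha lam V0 t = V0) \<and> (V \<longlongrightarrow> lam * V0) at_top"
proof -
  have Vc': "\<forall>\<^sub>F t in at_top. V t = - alpha * V0 * exp ((-1) * t) + lam * V0"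
    using Vc by eventually_elim (simp add: assms(4))
  have "((\<lambda>t. - alpha * V0 * exp ((-1) * t) + lam * V0) \<longlongrightarrow> - alpha * V0 * 0 + lam * V0) at_top"
    by (intro tendsto_intros exp_neg_lim) auto
  then have "(V \<longlongrightarrow> lam * V0) at_top"
    using tendsto_cong[OF Vc'] by simp
  moreover have "lam / (alpha + 1) = 1" using assms by simp
  ultimately show ?thesis by (simp add: classical_mean_def)
qed

lemma case3:
  fixes alpha lam V0 :: real and V :: "real \<Rightarrow> real"
  assumes "alpha > 0" "lam > 0" "V0 > 0" "alpha < lam" "lam < alpha + 1"
    and Vc: "\<forall>\<^sub>F t in at_top. V t = - alpha / (lam - alpha) * V0 * exp (- t) + lam / (lam - alpha) * V0 * exp ((lam - alpha - 1) * t)"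
  shows "(V \<longlongrightarrow> 0) at_top \<and> (classical_mean alpha lam V0 \<longlongrightarrow> 0) at_top \<and>
       V \<sim>[at_top] (\<lambda>t. lam / (lam - alpha) * V0 * exp ((lam - alpha - 1) * t)) \<and>
       (\<forall>\<^sub>F t in at_top. classical_mean alpha lam V0 t > V t)"
proof -
  define A where "A = lam / (lam - alpha) * V0"
  define B where "B = - alpha / (lam - alpha) * V0"
  define p where "p = lam - alpha - 1"
  define q where "q = lam / (alpha + 1) - 1"
  have A: "A > 0" unfolding A_def using assms by simp
  have p: "p < 0" "p > -1" unfolding p_def using assms by auto
  have idq: "p - q = p * alpha / (alpha + 1)" unfolding p_def q_def using assms(1) by (simp add: field_simps)
  have "p * alpha / (alpha + 1) < 0" using p assms(1) by (simp add: divide_neg_pos mult_neg_pos)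
  then have qp: "p < q" using idq by linarith
  have q: "q < 0" unfolding q_def using assms(1,5) by (simp add: field_simps)
  have Sd: "classical_mean alpha lam V0 = (\<lambda>t. V0 * exp (q * t))" by (auto simp: classical_mean_def q_def)
  have Vc': "\<forall>\<^sub>F t in at_top. V t = A * exp (p * t) + B * exp ((-1) * t)"
    using Vc by eventually_elim (simp add: A_def B_def p_def)
  have eq: "V \<sim>[at_top] (\<lambda>t. A * exp (p * t))"
  proof -
    have "(\<lambda>t. A * exp (p * t) + B * exp ((-1) * t)) \<sim>[at_top] (\<lambda>t. A * exp (p * t))"
      by (rule dom_equiv) (use A p in auto)
    then show ?thesis using asymp_equiv_cong[OF Vc', of "\<lambda>t. A * exp (p * t)" "\<lambda>t. A * exp (p * t)"] by simp
  qed
  have "((\<lambda>t. A * exp (p * t) + B * exp ((-1) * t)) \<longlongrightarrow> A * 0 + B * 0) at_top"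
    by (intro tendsto_intros exp_neg_lim) (use p in auto)
  then have 1: "(V \<longlongrightarrow> 0) at_top" using tendsto_cong[OF Vc'] by simp
  have "((\<lambda>t. V0 * exp (q * t)) \<longlongrightarrow> V0 * 0) at_top"
    by (intro tendsto_intros exp_neg_lim q)
  then have 2: "(classical_mean alpha lam V0 \<longlongrightarrow> 0) at_top" unfolding Sd by simp
  have 4: "\<forall>\<^sub>F t in at_top. classical_mean alpha lam V0 t > V t"
    using dom_ev[where A=V0 and B=B and r="-1" and C=A and q=p and p=q] assms(3) p qp Vc' unfolding Sd
    by (auto elim: eventually_elim2)
  show ?thesis using 1 2 4 eq by (simp add: A_def p_def)
qed

lemma case4:
  fixes alpha lam V0 :: real and V :: "real \<Rightarrow> real"
  assumes "alpha > 0" "V0 > 0"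
    and Vc: "\<forall>\<^sub>F t in at_top. V t = V0 * exp (- t) * (1 + alpha * t)"
  shows "(V \<longlongrightarrow> 0) at_top \<and> (classical_mean alpha alpha V0 \<longlongrightarrow> 0) at_top \<and>
       V \<sim>[at_top] (\<lambda>t. alpha * t * V0 * exp (- t)) \<and>
       (\<forall>\<^sub>F t in at_top. classical_mean alpha alpha V0 t > V t)"
proof -
  define q where "q = alpha / (alpha + 1) - 1"
  have q: "q < 0" "q > -1" unfolding q_def using assms(1) by (auto simp: field_simps)
  have Sd: "classical_mean alpha alpha V0 = (\<lambda>t. V0 * exp (q * t))" by (auto simp: classical_mean_def q_def)
  have "((\<lambda>t. V0 * exp (- t) * (1 + alpha * t)) \<longlongrightarrow> 0) at_top" by real_asymp
  then have 1: "(V \<longlongrightarrow> 0) at_top" using tendsto_cong[OF Vc] by simp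
  have "((\<lambda>t. V0 * exp (q * t)) \<longlongrightarrow> V0 * 0) at_top"
    by (intro tendsto_intros exp_neg_lim q)
  then have 2: "(classical_mean alpha alpha V0 \<longlongrightarrow> 0) at_top" unfolding Sd by simp
  have "(\<lambda>t. V0 * exp (- t) * (1 + alpha * t)) \<sim>[at_top] (\<lambda>t. alpha * t * V0 * exp (- t))"
    using assms(1,2) by real_asymp
  then have 3: "V \<sim>[at_top] (\<lambda>t. alpha * t * V0 * exp (- t))"
    using asymp_equiv_cong[OF Vc, of "\<lambda>t. alpha * t * V0 * exp (- t)" "\<lambda>t. alpha * t * V0 * exp (- t)"] by simp
  have k: "-1 - q < 0" using q by simp
  have "((\<lambda>t. (1 + alpha * t) * exp ((-1 - q) * t)) \<longlongrightarrow> 0) at_top"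
    using k by real_asymp
  then have "\<forall>\<^sub>F t in at_top. (1 + alpha * t) * exp ((-1 - q) * t) < 1"
    by (rule order_tendstoD(2)) simp
  then have 4: "\<forall>\<^sub>F t in at_top. classical_mean alpha alpha V0 t > V t"
    using Vc unfolding Sd
  proof (eventually_elim)
    case (elim t)
    have "V0 * ((1 + alpha * t) * exp ((-1 - q) * t)) * exp (q * t) < V0 * 1 * exp (q * t)"
      using elim(1) assms(2) by simp
    moreover have "V0 * ((1 + alpha * t) * exp ((-1 - q) * t)) * exp (q * t) = V t"
      using elim(2) by (simp add: algebra_simps flip: exp_add)
    ultimately show ?case by simp
  qed
  show ?thesis using 1 2 3 4 by simp
qed

lemma case5:
  fixes alpha lam V0 :: real and V :: "real \<Rightarrow> real"
  assumes "alpha > 0" "lam > 0" "V0 > 0" "lam < alpha"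
    and Vc: "\<forall>\<^sub>F t in at_top. V t = - alpha / (lam - alpha) * V0 * exp (- t) + lam / (lam - alpha) * V0 * exp ((lam - alpha - 1) * t)"
  shows "(V \<longlongrightarrow> 0) at_top \<and> (classical_mean alpha lam V0 \<longlongrightarrow> 0) at_top \<and>
       V \<sim>[at_top] (\<lambda>t. alpha / (alpha - lam) * V0 * exp (- t)) \<and>
       (\<forall>\<^sub>F t in at_top. classical_mean alpha lam V0 t > V t)"
proof -
  define A where "A = alpha / (alpha - lam) * V0"
  define B where "B = lam / (lam - alpha) * V0"
  define p where "p = lam - alpha - 1"
  define q where "q = lam / (alpha + 1) - 1"
  have A: "A > 0" unfolding A_def using assms by simp
  have p: "p < -1" unfolding p_def using assms by auto
  have q: "q < 0" "q > -1" unfolding q_def using assms(1,2,4) by (auto simp: field_simps)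
  have Sd: "classical_mean alpha lam V0 = (\<lambda>t. V0 * exp (q * t))" by (auto simp: classical_mean_def q_def)
  have Vc': "\<forall>\<^sub>F t in at_top. V t = A * exp ((-1) * t) + B * exp (p * t)"
    using Vc by eventually_elim (simp add: A_def B_def p_def minus_divide_right)
  have eq: "V \<sim>[at_top] (\<lambda>t. A * exp ((-1) * t))"
  proof -
    have "(\<lambda>t. A * exp ((-1) * t) + B * exp (p * t)) \<sim>[at_top] (\<lambda>t. A * exp ((-1) * t))"
      by (rule dom_equiv) (use A p in auto)
    then show ?thesis using asymp_equiv_cong[OF Vc', of "\<lambda>t. A * exp ((-1) * t)" "\<lambda>t. A * exp ((-1) * t)"] by simp
  qed
  have "((\<lambda>t. A * exp ((-1) * t) + B * exp (p * t)) \<longlongrightarrow> A * 0 + B * 0) at_top"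
    by (intro tendsto_intros exp_neg_lim) (use p in auto)
  then have 1: "(V \<longlongrightarrow> 0) at_top" using tendsto_cong[OF Vc'] by simp
  have "((\<lambda>t. V0 * exp (q * t)) \<longlongrightarrow> V0 * 0) at_top"
    by (intro tendsto_intros exp_neg_lim q)
  then have 2: "(classical_mean alpha lam V0 \<longlongrightarrow> 0) at_top" unfolding Sd by simp
  have 4: "\<forall>\<^sub>F t in at_top. classical_mean alpha lam V0 t > V t"
    using dom_ev[where A=V0 and B=A and r="-1" and C=B and q=p and p=q] assms(3) p q Vc' unfolding Sd
    by (auto elim: eventually_elim2)
  show ?thesis using 1 2 4 eq by (simp add: A_def)
qed

theorem theorem5p2:
  fixes alpha lam V0 :: real and b :: "real \<Rightarrow> real"
  assumes "alpha > 0" "lam > 0" "V0 > 0"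
    and "ageing_birth_eq alpha lam V0 b"
  defines "V \<equiv> ageing_mean V0 b" and "S \<equiv> classical_mean alpha lam V0"
  shows
   "(lam > alpha + 1 \<longrightarrow>
       filterlim V at_top at_top \<and> filterlim S at_top at_top \<and>
       V \<sim>[at_top] (\<lambda>t. lam / (lam - alpha) * V0 * exp ((lam - alpha - 1) * t)) \<and>
       (\<forall>\<^sub>F t in at_top. V t > S t))
  \<and> (lam = alpha + 1 \<longrightarrow> (\<forall>t\<ge>0. S t = V0) \<and> (V \<longlongrightarrow> lam * V0) at_top)
  \<and> (alpha < lam \<and> lam < alpha + 1 \<longrightarrow>
       (V \<longlongrightarrow> 0) at_top \<and> (S \<longlongrightarrow> 0) at_top \<and>
       V \<sim>[at_top] (\<lambda>t. lam / (lam - alpha) * V0 * exp ((lam - alpha - 1) * t)) \<and>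
       (\<forall>\<^sub>F t in at_top. S t > V t))
  \<and> (lam = alpha \<longrightarrow>
       (V \<longlongrightarrow> 0) at_top \<and> (S \<longlongrightarrow> 0) at_top \<and>
       V \<sim>[at_top] (\<lambda>t. alpha * t * V0 * exp (- t)) \<and>
       (\<forall>\<^sub>F t in at_top. S t > V t))
  \<and> (lam < alpha \<longrightarrow>
       (V \<longlongrightarrow> 0) at_top \<and> (S \<longlongrightarrow> 0) at_top \<and>
       V \<sim>[at_top] (\<lambda>t. alpha / (alpha - lam) * V0 * exp (- t)) \<and>
       (\<forall>\<^sub>F t in at_top. S t > V t))"
proof -
  have Vall: "\<forall>\<^sub>F t in at_top. V t = (if lam = alpha then V0 * exp (- t) * (1 + alpha * t)
     else - alpha / (lam - alpha) * V0 * exp (- t) + lam / (lam - alpha) * V0 * exp ((lam - alpha - 1) * t))"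
    using eventually_ge_at_top[of "0::real"]
    by eventually_elim (simp add: V_def V_closed[OF assms(4)])
  have Vne: "lam \<noteq> alpha \<Longrightarrow> \<forall>\<^sub>F t in at_top. V t = - alpha / (lam - alpha) * V0 * exp (- t) + lam / (lam - alpha) * V0 * exp ((lam - alpha - 1) * t)"
    using Vall by eventually_elim simp
  have Veq: "lam = alpha \<Longrightarrow> \<forall>\<^sub>F t in at_top. V t = V0 * exp (- t) * (1 + alpha * t)"
    using Vall by eventually_elim simp
  have c1: "lam > alpha + 1 \<longrightarrow>
       filterlim V at_top at_top \<and> filterlim S at_top at_top \<and>
       V \<sim>[at_top] (\<lambda>t. lam / (lam - alpha) * V0 * exp ((lam - alpha - 1) * t)) \<and>
       (\<forall>\<^sub>F t in at_top. V t > S t)"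
    using case1[OF assms(1,2,3) _ Vne] unfolding S_def by auto
  have c2: "lam = alpha + 1 \<longrightarrow> (\<forall>t\<ge>0. S t = V0) \<and> (V \<longlongrightarrow> lam * V0) at_top"
    using case2[OF assms(1,2,3) _ Vne] unfolding S_def by auto
  have c3: "alpha < lam \<and> lam < alpha + 1 \<longrightarrow>
       (V \<longlongrightarrow> 0) at_top \<and> (S \<longlongrightarrow> 0) at_top \<and>
       V \<sim>[at_top] (\<lambda>t. lam / (lam - alpha) * V0 * exp ((lam - alpha - 1) * t)) \<and>
       (\<forall>\<^sub>F t in at_top. S t > V t)"
    using case3[OF assms(1,2,3) _ _ Vne] unfolding S_def by auto
  have c4: "lam = alpha \<longrightarrow>
       (V \<longlongrightarrow> 0) at_top \<and> (S \<longlongrightarrow> 0) at_top \<and>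
       V \<sim>[at_top] (\<lambda>t. alpha * t * V0 * exp (- t)) \<and>
       (\<forall>\<^sub>F t in at_top. S t > V t)"
    using case4[OF assms(1,3) Veq] unfolding S_def by auto
  have c5: "lam < alpha \<longrightarrow>
       (V \<longlongrightarrow> 0) at_top \<and> (S \<longlongrightarrow> 0) at_top \<and>
       V \<sim>[at_top] (\<lambda>t. alpha / (alpha - lam) * V0 * exp (- t)) \<and>
       (\<forall>\<^sub>F t in at_top. S t > V t)"
    using case5[OF assms(1,2,3) _ Vne] unfolding S_def by auto
  show ?thesis using c1 c2 c3 c4 c5 by blast
qed

end
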